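(* Let $\beta_2\in(0,1)$, $\epsilon>0$, and let $g_1,g_2,\dots$ be random vectors in $\mathbb{R}^D$ with $\mathbb{E}\|g_t\|^2\le G^2$ for all $t\ge1$. Define $v_0=0$, $v_t=\beta_2v_{t-1}+(1-\beta_2)g_t\odot g_t$ for $t\ge1$. Then for every $T\ge1$, $$\sum_{t=1}^T\mathbb{E}\left[\left\|\frac{g_t}{\sqrt{v_t+\epsilon^2}}\right\|^2\right]\le\frac{D}{1-\beta_2}\left(\log\Big(1+\frac{(1-\beta_2^T)G^2}{\epsilon^2}\Big)-T\log\beta_2\right).$$
   Context: $\odot$, square root, division and addition of a scalar act elementwise; norms are Euclidean. These are the second-moment estimates of RMSprop. *)

theory Defs
  imports "HOL-Probability.Probability"
begin

fun rmsprop_v :: "real \<Rightarrow> (nat \<Rightarrow> real^'d) \<Rightarrow> nat \<Rightarrow> real^'d" where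
  "rmsprop_v \<beta>2 g 0 = 0"
| "rmsprop_v \<beta>2 g (Suc t) =
     (\<chi> i. \<beta>2 * (rmsprop_v \<beta>2 g t $ i) + (1 - \<beta>2) * (g (Suc t) $ i) * (g (Suc t) $ i))"

end

theory Submission
  imports Defs
begin

lemma stepA:
  fixes b y a e :: real
  assumes "0<b" "b<1" "0<e" "0\<le>y" "0\<le>a"
  shows "(1-b)*a/(b*y+(1-b)*a+e) \<le> ln(b*y+(1-b)*a+e) - ln(y+e) - ln b"
proof -
  define X where "X = b*y+(1-b)*a+e"
  define Y where "Y = y+e"
  have X: "X>0" unfolding X_def using assms by (simp add: add_nonneg_pos)
  have Y: "Y>0" unfolding Y_def using assms by simp
  have "ln (b*Y/X) \<le> b*Y/X - 1" using X Y assms by (intro ln_le_minus_one) simp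
  moreover have "ln (b*Y/X) = ln b + ln Y - ln X" using X Y assms by (simp add: ln_mult ln_div)
  moreover have "(1-b)*a/X \<le> 1 - b*Y/X"
  proof -
    have "(1-b)*a \<le> X - b*Y" unfolding X_def Y_def using assms by (simp add: algebra_simps)
    hence "(1-b)*a/X \<le> (X - b*Y)/X" using X by (simp add: divide_right_mono)
    also have "\<dots> = 1 - b*Y/X" using X by (simp add: field_simps)
    finally show ?thesis .
  qed
  ultimately show ?thesis unfolding X_def[symmetric] Y_def[symmetric] by linarith
qed

lemma v_nonneg:
  assumes "0\<le>b" "b\<le>1"
  shows "0 \<le> rmsprop_v b g t $ i"
proof (induction t)
  case 0 then show ?case by simp
next
  case (Suc t)
  have "0 \<le> (1-b) * (g (Suc t) $ i * g (Suc t) $ i)" using assms by simp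
  moreover have "0 \<le> b * rmsprop_v b g t $ i" using Suc assms by simp
  ultimately show ?case by (simp add: mult.assoc)
qed

lemma stepB:
  fixes b e :: real
  assumes "0<b" "b<1" "0<e"
  shows "(\<Sum>t=1..T. (1-b)*(g t $ i * g t $ i)/(rmsprop_v b g t $ i + e))
     \<le> ln (rmsprop_v b g T $ i + e) - ln e - real T * ln b"
proof (induction T)
  case 0
  then show ?case by simp
next
  case (Suc T)
  have y: "0 \<le> rmsprop_v b g T $ i" using assms by (intro v_nonneg) auto
  have "(1-b)*(g (Suc T) $ i * g (Suc T) $ i)/(rmsprop_v b g (Suc T) $ i + e)
    = (1-b)*(g (Suc T) $ i * g (Suc T) $ i)/(b * rmsprop_v b g T $ i + (1-b)*(g (Suc T) $ i * g (Suc T) $ i) + e)"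
    by (simp add: algebra_simps)
  also have "\<dots> \<le> ln (b * rmsprop_v b g T $ i + (1-b)*(g (Suc T) $ i * g (Suc T) $ i) + e) - ln (rmsprop_v b g T $ i + e) - ln b"
    using assms y by (intro stepA) auto
  also have "b * rmsprop_v b g T $ i + (1-b)*(g (Suc T) $ i * g (Suc T) $ i) + e = rmsprop_v b g (Suc T) $ i + e"
    by (simp add: algebra_simps)
  finally have "(1-b)*(g (Suc T) $ i * g (Suc T) $ i)/(rmsprop_v b g (Suc T) $ i + e) \<le>
     ln (rmsprop_v b g (Suc T) $ i + e) - ln (rmsprop_v b g T $ i + e) - ln b" .
  with Suc show ?case by (simp add: sum.cl_ivl_Suc algebra_simps)
qed

lemma tangent:
  fixes x c :: real
  assumes "0\<le>x" "0\<le>c"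
  shows "ln (1+x) \<le> ln (1+c) + (x-c)/(1+c)"
proof -
  have "ln ((1+x)/(1+c)) \<le> (1+x)/(1+c) - 1" using assms by (intro ln_le_minus_one) auto
  moreover have "ln ((1+x)/(1+c)) = ln (1+x) - ln (1+c)" using assms by (simp add: ln_div)
  moreover have "(1+x)/(1+c) - 1 = (x-c)/(1+c)" using assms by (simp add: field_simps)
  ultimately show ?thesis by linarith
qed

lemma comp_meas: "(f::'a\<Rightarrow>real^'d) \<in> borel_measurable M \<Longrightarrow> (\<lambda>w. f w $ i) \<in> borel_measurable M"
  by (rule borel_measurable_continuous_on[where f="\<lambda>x. x$i"]) (auto intro: continuous_intros)

lemma normsq: "(norm (x::real^'d))\<^sup>2 = (\<Sum>i\<in>UNIV. x$i * x$i)"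
  by (simp add: norm_vec_def L2_set_def sum_nonneg power2_eq_square)

lemma meas_v:
  assumes "\<forall>t\<ge>1. g t \<in> borel_measurable M"
  shows "(\<lambda>\<omega>. rmsprop_v b (\<lambda>s. g s \<omega>) t $ i) \<in> borel_measurable M"
proof (induction t)
  case 0 then show ?case by simp
next
  case (Suc t)
  have "(\<lambda>w. g (Suc t) w $ i) \<in> borel_measurable M" using assms by (intro comp_meas) auto
  with Suc show ?case by simp
qed

lemma S_bound:
  fixes M :: "'a measure" and g :: "nat \<Rightarrow> 'a \<Rightarrow> real^'d"
  assumes "prob_space M" "0 < b" "b < 1"
    and "\<forall>t\<ge>1. g t \<in> borel_measurable M"
    and "\<forall>t\<ge>1. integrable M (\<lambda>\<omega>. (norm (g t \<omega>))\<^sup>2)"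
    and "\<forall>t\<ge>1. (\<integral>\<omega>. (norm (g t \<omega>))\<^sup>2 \<partial>M) \<le> G\<^sup>2"
  shows "integrable M (\<lambda>\<omega>. \<Sum>i\<in>UNIV. rmsprop_v b (\<lambda>s. g s \<omega>) T $ i) \<and>
     (\<integral>\<omega>. (\<Sum>i\<in>UNIV. rmsprop_v b (\<lambda>s. g s \<omega>) T $ i) \<partial>M) \<le> (1 - b^T) * G\<^sup>2"
proof (induction T)
  case 0 then show ?case by simp
next
  case (Suc T)
  have eq: "(\<lambda>\<omega>. \<Sum>i\<in>UNIV. rmsprop_v b (\<lambda>s. g s \<omega>) (Suc T) $ i) =
    (\<lambda>\<omega>. b * (\<Sum>i\<in>UNIV. rmsprop_v b (\<lambda>s. g s \<omega>) T $ i) + (1-b) * (norm (g (Suc T) \<omega>))\<^sup>2)"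
    by (simp add: normsq sum.distrib sum_distrib_left mult.assoc)
  have i1: "integrable M (\<lambda>\<omega>. (norm (g (Suc T) \<omega>))\<^sup>2)" using assms by auto
  have b1: "(\<integral>\<omega>. (norm (g (Suc T) \<omega>))\<^sup>2 \<partial>M) \<le> G\<^sup>2" using assms by auto
  have int: "integrable M (\<lambda>\<omega>. \<Sum>i\<in>UNIV. rmsprop_v b (\<lambda>s. g s \<omega>) (Suc T) $ i)"
    unfolding eq using Suc i1 by auto
  have "(\<integral>\<omega>. (\<Sum>i\<in>UNIV. rmsprop_v b (\<lambda>s. g s \<omega>) (Suc T) $ i) \<partial>M)
     = b * (\<integral>\<omega>. (\<Sum>i\<in>UNIV. rmsprop_v b (\<lambda>s. g s \<omega>) T $ i) \<partial>M) + (1-b) * (\<integral>\<omega>. (norm (g (Suc T) \<omega>))\<^sup>2 \<partial>M)"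
    unfolding eq using Suc i1 by simp
  also have "\<dots> \<le> b * ((1 - b^T) * G\<^sup>2) + (1-b) * G\<^sup>2"
    using Suc b1 assms by (intro add_mono mult_left_mono) auto
  also have "\<dots> = (1 - b^Suc T) * G\<^sup>2" by (simp add: algebra_simps)
  finally show ?case using int by simp
qed

lemma alg1: "\<lbrakk>0 < (b::real); b < 1; 0 < e; 0 \<le> C\<rbrakk> \<Longrightarrow> (1/(1-b)) * (L + (x / e - C)/(1+C) - t * lb) = (L - C/(1+C) - t*lb)/(1-b) + 1 / (e * (1-b) * (1+C)) * x"
proof -
  assume a: "0 < (b::real)" "b < 1" "0 < e" "0 \<le> C"
  have "(x / e - C)/(1+C) = x/(e*(1+C)) - C/(1+C)" using a by (simp add: diff_divide_distrib)
  then show ?thesis using a by (simp add: divide_simps) (simp add: algebra_simps)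
qed
lemma alg2: "\<lbrakk>0 < (b::real); b < 1; 0 < e; 0 \<le> C\<rbrakk> \<Longrightarrow> D * ((L - C/(1+C) - t*lb)/(1-b)) + 1 / (e * (1-b) * (1+C)) * (C * e) = D / (1-b) * (L - t * lb) - (D - 1) * C / ((1-b)*(1+C))"
  by (simp add: divide_simps) (simp add: algebra_simps)

theorem lemmaG5:
  fixes M :: "'a measure" and g :: "nat \<Rightarrow> 'a \<Rightarrow> real^'d"
    and \<beta>2 \<epsilon> G :: real and T :: nat
  assumes "prob_space M"
    and "0 < \<beta>2" and "\<beta>2 < 1" and "0 < \<epsilon>"
    and "\<forall>t\<ge>1. g t \<in> borel_measurable M"
    and "\<forall>t\<ge>1. integrable M (\<lambda>\<omega>. (norm (g t \<omega>))\<^sup>2)"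
    and "\<forall>t\<ge>1. (\<integral>\<omega>. (norm (g t \<omega>))\<^sup>2 \<partial>M) \<le> G\<^sup>2"
    and "T \<ge> 1"
  shows "(\<Sum>t=1..T. \<integral>\<omega>. (norm (\<chi> i. g t \<omega> $ i /
              sqrt (rmsprop_v \<beta>2 (\<lambda>s. g s \<omega>) t $ i + \<epsilon>\<^sup>2)))\<^sup>2 \<partial>M)
         \<le> real CARD('d) / (1 - \<beta>2) *
            (ln (1 + (1 - \<beta>2 ^ T) * G\<^sup>2 / \<epsilon>\<^sup>2) - real T * ln \<beta>2)"
proof -
  note ps = assms(1)
  define b where "b = \<beta>2"
  define e where "e = \<epsilon>\<^sup>2"
  define D where "D = real CARD('d)"
  define C where "C = (1 - b ^ T) * G\<^sup>2 / e"
  define v where "v = (\<lambda>t \<omega>. rmsprop_v b (\<lambda>s. g s \<omega>) t)"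
  define S where "S = (\<lambda>\<omega>. \<Sum>i\<in>UNIV. v T \<omega> $ i)"
  have b0: "0 < b" "b < 1" using assms by (auto simp: b_def)
  have e0: "0 < e" using assms by (simp add: e_def)
  have D1: "1 \<le> D" unfolding D_def by simp
  have bT: "b ^ T \<le> 1" using b0 by (simp add: power_le_one)
  have C0: "0 \<le> C" unfolding C_def using bT e0 by simp
  have vnn: "\<And>t \<omega> i. 0 \<le> v t \<omega> $ i" unfolding v_def using b0 by (intro v_nonneg) auto
  define f where "f = (\<lambda>t \<omega>. \<Sum>i\<in>UNIV. (g t \<omega> $ i * g t \<omega> $ i) / (v t \<omega> $ i + e))"
  have feq: "(norm (\<chi> i. g t \<omega> $ i / sqrt (rmsprop_v \<beta>2 (\<lambda>s. g s \<omega>) t $ i + \<epsilon>\<^sup>2)))\<^sup>2 = f t \<omega>"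
    for t \<omega>
  proof -
    have "\<And>i. 0 \<le> v t \<omega> $ i + e" using vnn e0 by (simp add: add_nonneg_pos less_imp_le)
    then show ?thesis unfolding normsq f_def
      by (simp add: v_def b_def e_def power2_eq_square[symmetric] power_divide)
  qed
  have fint: "integrable M (f t)" if t: "t \<ge> 1" for t
  proof (rule Bochner_Integration.integrable_bound)
    show "integrable M (\<lambda>\<omega>. (norm (g t \<omega>))\<^sup>2 / e)" using assms t by auto
    have "\<And>i. (\<lambda>\<omega>. g t \<omega> $ i) \<in> borel_measurable M" using assms t by (intro comp_meas) auto
    moreover have "\<And>i. (\<lambda>\<omega>. v t \<omega> $ i) \<in> borel_measurable M" unfolding v_def
      using assms by (intro meas_v) auto
    ultimately show "f t \<in> borel_measurable M" unfolding f_def by auto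
    show "AE \<omega> in M. norm (f t \<omega>) \<le> norm ((norm (g t \<omega>))\<^sup>2 / e)"
    proof (rule AE_I2)
      fix \<omega>
      have fnn: "0 \<le> f t \<omega>" unfolding f_def using vnn e0
        by (intro sum_nonneg divide_nonneg_pos) (auto simp: add_nonneg_pos)
      have "f t \<omega> \<le> (\<Sum>i\<in>UNIV. (g t \<omega> $ i * g t \<omega> $ i) / e)" unfolding f_def
        using vnn e0 by (intro sum_mono divide_left_mono) (auto simp: add_nonneg_pos)
      also have "\<dots> = (norm (g t \<omega>))\<^sup>2 / e" by (simp add: normsq sum_divide_distrib)
      finally show "norm (f t \<omega>) \<le> norm ((norm (g t \<omega>))\<^sup>2 / e)" using fnn e0 by simp
    qed
  qed
  have nz: "1 - b \<noteq> 0" "1 + C \<noteq> 0" "e \<noteq> 0" "C + 1 \<noteq> 0" using b0 C0 e0 by auto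
  have fm: "finite_measure M" using ps by (rule prob_space.finite_measure)
  define c0 where "c0 = (ln (1+C) - C/(1+C) - real T * ln b) / (1-b)"
  define k where "k = 1 / (e * (1-b) * (1+C))"
  have pw: "(\<Sum>t=1..T. f t \<omega>) \<le> D * c0 + k * S \<omega>" for \<omega>
  proof -
    have "(\<Sum>t=1..T. f t \<omega>) = (\<Sum>i\<in>UNIV. (1/(1-b)) * (\<Sum>t=1..T. (1-b)*(g t \<omega> $ i * g t \<omega> $ i)/(v t \<omega> $ i + e)))"
      unfolding f_def using b0 by (subst sum.swap) (simp add: sum_distrib_left)
    also have "\<dots> \<le> (\<Sum>i\<in>UNIV. (1/(1-b)) * (ln (v T \<omega> $ i + e) - ln e - real T * ln b))"
      using b0 e0 unfolding v_def by (intro sum_mono mult_left_mono stepB) auto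
    also have "\<dots> \<le> (\<Sum>i\<in>UNIV. c0 + k * v T \<omega> $ i)"
    proof (intro sum_mono)
      fix i
      have "ln (v T \<omega> $ i + e) - ln e = ln (1 + v T \<omega> $ i / e)"
      proof -
        have "1 + v T \<omega> $ i / e = (v T \<omega> $ i + e) / e" using e0 by (simp add: field_simps)
        moreover have "0 < v T \<omega> $ i + e" using e0 vnn by (simp add: add_nonneg_pos)
        ultimately show ?thesis using e0 by (simp add: ln_div)
      qed
      also have "\<dots> \<le> ln (1+C) + (v T \<omega> $ i / e - C)/(1+C)"
        using e0 vnn C0 by (intro tangent) auto
      finally have "(1/(1-b)) * (ln (v T \<omega> $ i + e) - ln e - real T * ln b)
          \<le> (1/(1-b)) * (ln (1+C) + (v T \<omega> $ i / e - C)/(1+C) - real T * ln b)"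
        using b0 by (intro mult_left_mono) auto
      also have "\<dots> = c0 + k * v T \<omega> $ i"
        unfolding c0_def k_def using b0 e0 C0 by (rule alg1)
      finally show "(1/(1-b)) * (ln (v T \<omega> $ i + e) - ln e - real T * ln b) \<le> c0 + k * v T \<omega> $ i" .
    qed
    also have "\<dots> = D * c0 + k * S \<omega>"
      unfolding D_def S_def by (simp add: sum.distrib sum_distrib_left)
    finally show ?thesis .
  qed
  have SB: "integrable M S \<and> integral\<^sup>L M S \<le> (1 - b^T) * G\<^sup>2"
    unfolding S_def v_def using S_bound[OF ps b0 assms(5-7)] by simp
  have "(\<Sum>t=1..T. \<integral>\<omega>. (norm (\<chi> i. g t \<omega> $ i /
              sqrt (rmsprop_v \<beta>2 (\<lambda>s. g s \<omega>) t $ i + \<epsilon>\<^sup>2)))\<^sup>2 \<partial>M) = (\<Sum>t=1..T. integral\<^sup>L M (f t))"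
    by (simp add: feq)
  also have "\<dots> = (\<integral>\<omega>. (\<Sum>t=1..T. f t \<omega>) \<partial>M)"
    using Bochner_Integration.integral_sum[where I="{1..T}" and f=f] fint by auto
  also have "\<dots> \<le> (\<integral>\<omega>. (D * c0 + k * S \<omega>) \<partial>M)"
  proof -
    have "integrable M (\<lambda>\<omega>. D * c0 + k * S \<omega>)"
      using SB finite_measure.integrable_const[OF fm]
      by (intro Bochner_Integration.integrable_add integrable_mult_right) auto
    then show ?thesis using fint SB pw by (intro integral_mono) auto
  qed
  also have "\<dots> = D * c0 + k * integral\<^sup>L M S"
    using SB finite_measure.integrable_const[OF fm] prob_space.prob_space[OF ps]
    by (subst Bochner_Integration.integral_add) auto
  also have "\<dots> \<le> D * c0 + k * (C * e)"
  proof -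
    have "k \<ge> 0" unfolding k_def using e0 b0 C0 by simp
    moreover have "integral\<^sup>L M S \<le> C * e" using SB e0 unfolding C_def by simp
    ultimately show ?thesis by (simp add: mult_left_mono)
  qed
  also have "\<dots> \<le> D / (1-b) * (ln (1+C) - real T * ln b)"
  proof -
    have "D * c0 + k * (C * e) = D / (1-b) * (ln (1+C) - real T * ln b) - (D - 1) * C / ((1-b)*(1+C))"
      unfolding c0_def k_def using b0 e0 C0 by (rule alg2)
    moreover have "0 \<le> (D - 1) * C / ((1-b)*(1+C))" using D1 C0 b0 by simp
    ultimately show ?thesis by linarith
  qed
  finally show ?thesis unfolding D_def C_def b_def e_def by simp
qed

end
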